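(* For all integers $n\ge 2$ and $k\ge 1$, $b(n+1,k)\ge 2\,b(n,k)$.
   Context: A complete non-ambiguous matrix (CNM) of size $n$ is an $n\times n$ matrix $M=(m_{i,j})$ with entries in $\{0,1\}$ whose support $T=\{(i,j): m_{i,j}=1\}$ (whose elements are called vertices) satisfies: (1) $(1,1)\in T$; (2) for every $p=(i,j)\in T$ with $p\neq(1,1)$, exactly one of the following holds: there is $(i',j)\in T$ with $i'<i$, or there is $(i,j')\in T$ with $j'<j$; (3) every row and every column of $M$ contains at least one vertex; (4) define the parent of $p=(i,j)\neq(1,1)$ to be $(i',j)$ with $i'<i$ maximal if such a vertex exists, and otherwise $(i,j')$ with $j'<j$ maximal; then every vertex is the parent of either zero or exactly two vertices. A vertex with no children is a leaf. The leaf matrix $p(M)$ is obtained from $M$ by replacing all non-leaf vertices by $0$ (it is a permutation matrix). For $n\ge 1$ and $k\ge 0$, $b(n,k)$ denotes the number of permutations $\sigma\in S_n$ such that there are exactly $k$ CNMs $M$ of size $n$ whose leaf matrix $p(M)$ equals the permutation matrix of $\sigma$ (the matrix with $1$'s at positions $(i,\sigma(i))$). *)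

theory Defs
  imports "HOL-Combinatorics.Permutations"
begin

text \<open>A 0/1 matrix of size n is represented by its support T (a set of positions (i,j)
  with 1 \<le> i,j \<le> n, 1-based indices as in the paper).\<close>

definition parent :: "(nat \<times> nat) set \<Rightarrow> nat \<times> nat \<Rightarrow> nat \<times> nat" where
  "parent T p = (case p of (i, j) \<Rightarrow>
     if \<exists>i'<i. (i', j) \<in> T then (Max {i'. i' < i \<and> (i', j) \<in> T}, j)
     else (i, Max {j'. j' < j \<and> (i, j') \<in> T}))"

definition children :: "(nat \<times> nat) set \<Rightarrow> nat \<times> nat \<Rightarrow> (nat \<times> nat) set" where
  "children T p = {q \<in> T. q \<noteq> (1, 1) \<and> parent T q = p}"

definition is_CNM :: "nat \<Rightarrow> (nat \<times> nat) set \<Rightarrow> bool" where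
  "is_CNM n T \<longleftrightarrow>
     T \<subseteq> {1..n} \<times> {1..n} \<and>
     (1, 1) \<in> T \<and>
     (\<forall>(i, j) \<in> T. (i, j) \<noteq> (1, 1) \<longrightarrow>
        ((\<exists>i'<i. (i', j) \<in> T) \<noteq> (\<exists>j'<j. (i, j') \<in> T))) \<and>
     (\<forall>i\<in>{1..n}. \<exists>j. (i, j) \<in> T) \<and>
     (\<forall>j\<in>{1..n}. \<exists>i. (i, j) \<in> T) \<and>
     (\<forall>p \<in> T. card (children T p) = 0 \<or> card (children T p) = 2)"

definition leaves :: "(nat \<times> nat) set \<Rightarrow> (nat \<times> nat) set" where
  "leaves T = {p \<in> T. children T p = {}}"

definition perm_matrix :: "nat \<Rightarrow> (nat \<Rightarrow> nat) \<Rightarrow> (nat \<times> nat) set" where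
  "perm_matrix n \<sigma> = {(i, \<sigma> i) | i. i \<in> {1..n}}"

definition num_CNM :: "nat \<Rightarrow> (nat \<Rightarrow> nat) \<Rightarrow> nat" where
  "num_CNM n \<sigma> = card {T. is_CNM n T \<and> leaves T = perm_matrix n \<sigma>}"

definition b :: "nat \<Rightarrow> nat \<Rightarrow> nat" where
  "b n k = card {\<sigma>. \<sigma> permutes {1..n} \<and> num_CNM n \<sigma> = k}"

end

theory Submission
  imports Defs
begin

definition ab :: "(nat\<times>nat) set \<Rightarrow> nat \<Rightarrow> nat \<Rightarrow> bool" where
  "ab T i j \<longleftrightarrow> (\<exists>i'<i. (i',j)\<in>T)"
definition lf :: "(nat\<times>nat) set \<Rightarrow> nat \<Rightarrow> nat \<Rightarrow> bool" where
  "lf T i j \<longleftrightarrow> (\<exists>j'<j. (i,j')\<in>T)"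
definition wf2 :: "(nat\<times>nat) set \<Rightarrow> bool" where
  "wf2 T \<longleftrightarrow> (\<forall>i j. (i,j)\<in>T \<longrightarrow> (i,j)\<noteq>(1,1) \<longrightarrow> (ab T i j \<noteq> lf T i j))"

lemma is_CNM_iff: "is_CNM n T \<longleftrightarrow> T \<subseteq> {1..n}\<times>{1..n} \<and> (1,1)\<in>T \<and> wf2 T \<and>
   (\<forall>i\<in>{1..n}. \<exists>j. (i,j)\<in>T) \<and> (\<forall>j\<in>{1..n}. \<exists>i. (i,j)\<in>T) \<and>
   (\<forall>p\<in>T. card (children T p) = 0 \<or> card (children T p) = 2)"
  unfolding is_CNM_def wf2_def ab_def lf_def by auto

lemma parent_ab:
  assumes "ab T i j"
  shows "parent T (i,j) = (Max {x. x<i \<and> (x,j)\<in>T}, j)"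
    "Max {x. x<i \<and> (x,j)\<in>T} < i" "(Max {x. x<i \<and> (x,j)\<in>T}, j) \<in> T"
    "\<And>x. x<i \<Longrightarrow> (x,j)\<in>T \<Longrightarrow> x \<le> Max {x. x<i \<and> (x,j)\<in>T}"
proof -
  let ?S = "{x. x<i \<and> (x,j)\<in>T}"
  have fin: "finite ?S" by (rule finite_subset[of _ "{..<i}"]) auto
  have ne: "?S \<noteq> {}" using assms unfolding ab_def by auto
  have "Max ?S \<in> ?S" using Max_in[OF fin ne] .
  then show "Max ?S < i" "(Max ?S, j) \<in> T" by auto
  show "parent T (i,j) = (Max ?S, j)" using assms unfolding ab_def parent_def by auto
  show "\<And>x. x<i \<Longrightarrow> (x,j)\<in>T \<Longrightarrow> x \<le> Max ?S" by (rule Max_ge[OF fin]) simp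
qed

lemma parent_lf:
  assumes "\<not> ab T i j" "lf T i j"
  shows "parent T (i,j) = (i, Max {y. y<j \<and> (i,y)\<in>T})"
    "Max {y. y<j \<and> (i,y)\<in>T} < j" "(i, Max {y. y<j \<and> (i,y)\<in>T}) \<in> T"
    "\<And>y. y<j \<Longrightarrow> (i,y)\<in>T \<Longrightarrow> y \<le> Max {y. y<j \<and> (i,y)\<in>T}"
proof -
  let ?S = "{y. y<j \<and> (i,y)\<in>T}"
  have fin: "finite ?S" by (rule finite_subset[of _ "{..<j}"]) auto
  have ne: "?S \<noteq> {}" using assms unfolding lf_def by auto
  have "Max ?S \<in> ?S" using Max_in[OF fin ne] .
  then show "Max ?S < j" "(i, Max ?S) \<in> T" by auto
  show "parent T (i,j) = (i, Max ?S)" using assms unfolding ab_def parent_def by auto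
  show "\<And>y. y<j \<Longrightarrow> (i,y)\<in>T \<Longrightarrow> y \<le> Max ?S" by (rule Max_ge[OF fin]) simp
qed

lemma child_cases:
  assumes "wf2 T" "(a,c) \<in> children T (i,m)"
  shows "(a,c) \<in> T \<and> (i,m) \<in> T \<and> ((i<a \<and> c=m \<and> ab T a c \<and> (\<forall>x. i<x \<longrightarrow> x<a \<longrightarrow> (x,m)\<notin>T)) \<or>
     (a=i \<and> m<c \<and> \<not> ab T a c \<and> (\<forall>y. m<y \<longrightarrow> y<c \<longrightarrow> (i,y)\<notin>T)))"
proof -
  from assms(2) have q: "(a,c)\<in>T" "(a,c)\<noteq>(1,1)" "parent T (a,c) = (i,m)"
    unfolding children_def by auto
  show ?thesis
  proof (cases "ab T a c")
    case True
    note P = parent_ab[OF True]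
    have e: "i = Max {x. x<a \<and> (x,c)\<in>T}" "m = c" using P(1) q(3) by auto
    have "\<forall>x. i<x \<longrightarrow> x<a \<longrightarrow> (x,m)\<notin>T"
    proof (intro allI impI notI)
      fix x assume "i<x" "x<a" "(x,m)\<in>T"
      then have "x \<le> i" using P(4)[of x] e by simp
      then show False using \<open>i<x\<close> by simp
    qed
    moreover have "i < a" "(i,m) \<in> T" using P(2,3) e by simp_all
    ultimately show ?thesis using True e(2) q(1) by blast
  next
    case False
    then have "lf T a c" using assms(1) q unfolding wf2_def by auto
    note P = parent_lf[OF False this]
    have e: "m = Max {y. y<c \<and> (a,y)\<in>T}" "a = i" using P(1) q(3) by auto
    have "\<forall>y. m<y \<longrightarrow> y<c \<longrightarrow> (i,y)\<notin>T"
    proof (intro allI impI notI)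
      fix y assume "m<y" "y<c" "(i,y)\<in>T"
      then have "y \<le> m" using P(4)[of y] e by simp
      then show False using \<open>m<y\<close> by simp
    qed
    moreover have "m < c" "(i,m) \<in> T" using P(2,3) e by simp_all
    ultimately show ?thesis using False e(2) q(1) by blast
  qed
qed

lemma below_unique:
  assumes "wf2 T" "(a1,c1) \<in> children T (i,m)" "(a2,c2) \<in> children T (i,m)" "i<a1" "i<a2"
  shows "a1 = a2 \<and> c1 = c2"
proof -
  note A = child_cases[OF assms(1) assms(2)] and B = child_cases[OF assms(1) assms(3)]
  have "c1 = m" "c2 = m" using A B assms(4,5) by auto
  moreover have "\<not> a1 < a2" using A B assms(4,5) \<open>c1 = m\<close> by auto
  moreover have "\<not> a2 < a1" using A B assms(4,5) \<open>c2 = m\<close> by auto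
  ultimately show ?thesis by auto
qed

lemma right_unique:
  assumes "wf2 T" "(i,c1) \<in> children T (i,m)" "(i,c2) \<in> children T (i,m)"
  shows "c1 = c2"
proof -
  note A = child_cases[OF assms(1) assms(2)] and B = child_cases[OF assms(1) assms(3)]
  have "m < c1" "m < c2" using A B by auto
  moreover have "\<not> c1 < c2" using A B \<open>m < c1\<close> by auto
  moreover have "\<not> c2 < c1" using A B \<open>m < c2\<close> by auto
  ultimately show ?thesis by auto
qed

lemma has_both:
  assumes "wf2 T" "card (children T (i,m)) = 2"
  shows "\<exists>a c. children T (i,m) = {(a,m),(i,c)} \<and> i<a \<and> m<c \<and> (a,m)\<in>T \<and> (i,c)\<in>T \<and> (i,m) \<in> T"
proof -
  obtain x y where xy: "x\<noteq>y" "children T (i,m) = {x,y}" using assms(2) card_2_iff by metis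
  obtain x1 x2 y1 y2 where e: "x = (x1,x2)" "y = (y1,y2)" by fastforce
  have X: "(x1,x2) \<in> children T (i,m)" "(y1,y2) \<in> children T (i,m)" using xy e by auto
  note A = child_cases[OF assms(1) X(1)] and B = child_cases[OF assms(1) X(2)]
  have "\<not> (i < x1 \<and> i < y1)" using below_unique[OF assms(1) X] xy e by auto
  moreover have "\<not> (x1 = i \<and> y1 = i)" using right_unique[OF assms(1)] X xy e by blast
  ultimately have "(i < x1 \<and> y1 = i) \<or> (x1 = i \<and> i < y1)" using A B by auto
  then show ?thesis
  proof
    assume h: "i < x1 \<and> y1 = i"
    have "x2 = m" "m < y2" "(x1,m) \<in> T" "(i,y2) \<in> T" "(i,m)\<in>T" using A B h by auto
    moreover have "children T (i,m) = {(x1,m),(i,y2)}" using xy(2) e h \<open>x2 = m\<close> by simp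
    ultimately show ?thesis using h by blast
  next
    assume h: "x1 = i \<and> i < y1"
    have "y2 = m" "m < x2" "(y1,m) \<in> T" "(i,x2) \<in> T" "(i,m)\<in>T" using A B h by auto
    moreover have "children T (i,m) = {(y1,m),(i,x2)}" using xy(2) e h \<open>y2 = m\<close> by auto
    ultimately show ?thesis using h by blast
  qed
qed


lemma add_sets:
  assumes NI: "\<forall>p\<in>A. \<forall>q\<in>T. \<not>(fst p < fst q \<and> snd p = snd q) \<and> \<not>(fst p = fst q \<and> snd p < snd q)"
    and q: "(i,j)\<in>T"
  shows "{x. x<i \<and> (x,j)\<in>T\<union>A} = {x. x<i \<and> (x,j)\<in>T}"
    "{y. y<j \<and> (i,y)\<in>T\<union>A} = {y. y<j \<and> (i,y)\<in>T}"
proof -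
  show "{x. x<i \<and> (x,j)\<in>T\<union>A} = {x. x<i \<and> (x,j)\<in>T}"
  proof (intro set_eqI iffI)
    fix x assume "x \<in> {x. x<i \<and> (x,j)\<in>T\<union>A}"
    then have "x<i" "(x,j)\<in>T\<union>A" by auto
    moreover have "(x,j)\<notin>A" using NI q \<open>x<i\<close> by fastforce
    ultimately show "x \<in> {x. x<i \<and> (x,j)\<in>T}" by auto
  qed auto
  show "{y. y<j \<and> (i,y)\<in>T\<union>A} = {y. y<j \<and> (i,y)\<in>T}"
  proof (intro set_eqI iffI)
    fix y assume "y \<in> {y. y<j \<and> (i,y)\<in>T\<union>A}"
    then have "y<j" "(i,y)\<in>T\<union>A" by auto
    moreover have "(i,y)\<notin>A" using NI q \<open>y<j\<close> by fastforce
    ultimately show "y \<in> {y. y<j \<and> (i,y)\<in>T}" by auto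
  qed auto
qed

lemma add_ab:
  assumes NI: "\<forall>p\<in>A. \<forall>q\<in>T. \<not>(fst p < fst q \<and> snd p = snd q) \<and> \<not>(fst p = fst q \<and> snd p < snd q)"
    and q: "(i,j)\<in>T"
  shows "ab (T\<union>A) i j = ab T i j" "lf (T\<union>A) i j = lf T i j"
    "parent (T\<union>A) (i,j) = parent T (i,j)"
proof -
  note S = add_sets[OF NI q]
  have e1: "(\<exists>x<i. (x,j)\<in>T\<union>A) = (\<exists>x<i. (x,j)\<in>T)"
    using S(1) by (metis (no_types, lifting) mem_Collect_eq)
  have e2: "(\<exists>y<j. (i,y)\<in>T\<union>A) = (\<exists>y<j. (i,y)\<in>T)"
    using S(2) by (metis (no_types, lifting) mem_Collect_eq)
  show "ab (T\<union>A) i j = ab T i j" using e1 unfolding ab_def .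
  show "lf (T\<union>A) i j = lf T i j" using e2 unfolding lf_def .
  show "parent (T\<union>A) (i,j) = parent T (i,j)"
    unfolding parent_def by (simp only: prod.case e1 S)
qed

lemma add_parent:
  assumes NI: "\<forall>p\<in>A. \<forall>q\<in>T. \<not>(fst p < fst q \<and> snd p = snd q) \<and> \<not>(fst p = fst q \<and> snd p < snd q)"
    and q: "q\<in>T"
  shows "parent (T\<union>A) q = parent T q"
  using add_ab(3)[OF NI, of "fst q" "snd q"] q by simp

lemma add_children:
  assumes NI: "\<forall>p\<in>A. \<forall>q\<in>T. \<not>(fst p < fst q \<and> snd p = snd q) \<and> \<not>(fst p = fst q \<and> snd p < snd q)"
    and A11: "(1,1) \<notin> A"
  shows "children (T\<union>A) p = children T p \<union> {q\<in>A. parent (T\<union>A) q = p}"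
  unfolding children_def using add_parent[OF NI] A11 by auto

lemma par_in:
  assumes "wf2 T" "q\<in>T" "q\<noteq>(1,1)"
  shows "parent T q \<in> T"
proof -
  obtain i m where pm: "parent T q = (i,m)" by fastforce
  obtain a c where qe: "q = (a,c)" by fastforce
  have "(a,c) \<in> children T (i,m)" using assms pm qe unfolding children_def by auto
  then have "(i,m) \<in> T" using child_cases[OF assms(1)] by blast
  then show ?thesis using pm by simp
qed

lemma cnm_finite: "is_CNM n T \<Longrightarrow> finite T"
  unfolding is_CNM_iff by (meson finite_SigmaI finite_atLeastAtMost finite_subset)

lemma last_leaf:
  assumes C: "is_CNM n T" and L: "leaves T = perm_matrix n \<sigma>"
  shows "(n,x)\<in>T \<Longrightarrow> x = \<sigma> n" "(y,n)\<in>T \<Longrightarrow> y\<in>{1..n} \<and> \<sigma> y = n"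
proof -
  note CT = C[unfolded is_CNM_iff]
  have fin: "finite T" using cnm_finite[OF C] .
  have leaf: "p \<in> leaves T" if "p\<in>T" "card (children T p) \<noteq> 2" for p
  proof -
    have "card (children T p) = 0" using CT that by blast
    moreover have "finite (children T p)" using fin unfolding children_def by auto
    ultimately show ?thesis using that unfolding leaves_def by auto
  qed
  show "x = \<sigma> n" if h: "(n,x)\<in>T"
  proof -
    have "card (children T (n,x)) \<noteq> 2"
    proof
      assume "card (children T (n,x)) = 2"
      from has_both[OF _ this] CT obtain a where "n<a" "(a,x)\<in>T" by blast
      then show False using CT by auto
    qed
    then have "(n,x) \<in> perm_matrix n \<sigma>" using leaf h L by auto
    then show ?thesis unfolding perm_matrix_def by auto
  qed
  show "y\<in>{1..n} \<and> \<sigma> y = n" if h: "(y,n)\<in>T"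
  proof -
    have "card (children T (y,n)) \<noteq> 2"
    proof
      assume "card (children T (y,n)) = 2"
      from has_both[OF _ this] CT obtain c where "n<c" "(y,c)\<in>T" by blast
      then show False using CT by auto
    qed
    then have "(y,n) \<in> perm_matrix n \<sigma>" using leaf h L by auto
    then show ?thesis unfolding perm_matrix_def by auto
  qed
qed

definition extp :: "nat \<Rightarrow> (nat \<Rightarrow> nat) \<Rightarrow> nat \<Rightarrow> nat" where
  "extp n \<sigma> = (\<lambda>i. if i = n then n+1 else if i = n+1 then \<sigma> n else \<sigma> i)"

lemma extp_permutes:
  assumes sp: "\<sigma> permutes {1..n}" and n1: "1 \<le> n"
  shows "extp n \<sigma> permutes {1..n+1}"
proof -
  have "\<sigma> (n+1) = n+1" using permutes_not_in[OF sp] by auto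
  then have e: "extp n \<sigma> = \<sigma> \<circ> Transposition.transpose n (n+1)"
    by (auto simp: fun_eq_iff extp_def Transposition.transpose_def)
  have "\<sigma> permutes {1..n+1}" by (rule permutes_subset[OF sp]) auto
  moreover have "Transposition.transpose n (n+1) permutes {1..n+1}"
    using n1 by (intro permutes_swap_id) auto
  ultimately show ?thesis unfolding e by (metis permutes_compose)
qed

lemma pm_ext:
  assumes sp: "\<sigma> permutes {1..n}" and n1: "1 \<le> n"
  shows "perm_matrix (n+1) (extp n \<sigma>) = (perm_matrix n \<sigma> - {(n,\<sigma> n)}) \<union> {(n+1,\<sigma> n),(n,n+1)}"
proof (intro set_eqI iffI)
  fix p assume "p \<in> perm_matrix (n+1) (extp n \<sigma>)"
  then obtain i where i: "i\<in>{1..n+1}" "p = (i, extp n \<sigma> i)" unfolding perm_matrix_def by auto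
  show "p \<in> (perm_matrix n \<sigma> - {(n,\<sigma> n)}) \<union> {(n+1,\<sigma> n),(n,n+1)}"
  proof (cases "i = n \<or> i = n+1")
    case True then show ?thesis using i by (auto simp: extp_def)
  next
    case False
    then have "i \<in> {1..n}" "p = (i, \<sigma> i)" using i by (auto simp: extp_def)
    then show ?thesis using False unfolding perm_matrix_def by auto
  qed
next
  fix p assume h: "p \<in> (perm_matrix n \<sigma> - {(n,\<sigma> n)}) \<union> {(n+1,\<sigma> n),(n,n+1)}"
  show "p \<in> perm_matrix (n+1) (extp n \<sigma>)"
  proof (cases "p \<in> {(n+1,\<sigma> n),(n,n+1)}")
    case True
    then consider "p = (n+1,\<sigma> n)" | "p = (n,n+1)" by auto
    then show ?thesis
    proof cases
      case 1 then show ?thesis unfolding perm_matrix_def using n1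
        by (auto simp: extp_def intro!: exI[of _ "n+1"])
    next
      case 2 then show ?thesis unfolding perm_matrix_def using n1
        by (auto simp: extp_def intro!: exI[of _ "n"])
    qed
  next
    case False
    then obtain i where i: "i\<in>{1..n}" "p = (i, \<sigma> i)" "i \<noteq> n"
      using h unfolding perm_matrix_def by auto
    then show ?thesis unfolding perm_matrix_def by (auto simp: extp_def intro!: exI[of _ i])
  qed
qed


lemma Max_is:
  assumes "finite S" "x \<in> S" "\<And>y. y \<in> S \<Longrightarrow> y \<le> x"
  shows "Max S = x"
  using assms by (intro Max_eqI) auto

lemma fwd:
  assumes n1: "1 \<le> n" and sp: "\<sigma> permutes {1..n}" and C: "is_CNM n T"
    and L: "leaves T = perm_matrix n \<sigma>"
  shows "is_CNM (n+1) (T \<union> {(n+1,\<sigma> n),(n,n+1)}) \<and>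
    leaves (T \<union> {(n+1,\<sigma> n),(n,n+1)}) = (leaves T - {(n,\<sigma> n)}) \<union> {(n+1,\<sigma> n),(n,n+1)}"
proof -
  define j where "j = \<sigma> n"
  define A where "A = {(n+1,j),(n,n+1)}"
  define T' where "T' = T \<union> A"
  note CT = C[unfolded is_CNM_iff]
  have j: "1 \<le> j" "j \<le> n" using permutes_in_image[OF sp, of n] n1 j_def by auto
  have njP: "(n,j) \<in> perm_matrix n \<sigma>" unfolding perm_matrix_def j_def using n1 by auto
  then have nj: "(n,j) \<in> T" "children T (n,j) = {}" using L unfolding leaves_def by auto
  have row: "\<And>x. (n,x)\<in>T \<Longrightarrow> x = j" using last_leaf(1)[OF C L] j_def by auto
  have Tsub: "\<And>a c. (a,c) \<in> T \<Longrightarrow> 1 \<le> a \<and> a \<le> n \<and> 1 \<le> c \<and> c \<le> n" using CT by auto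
  have NI: "\<forall>p\<in>A. \<forall>q\<in>T. \<not>(fst p < fst q \<and> snd p = snd q) \<and> \<not>(fst p = fst q \<and> snd p < snd q)"
    unfolding A_def using Tsub by fastforce
  have A11: "(1,1) \<notin> A" unfolding A_def using n1 by auto
  have TA: "T \<inter> A = {}" unfolding A_def using Tsub by fastforce
  have pa: "parent T' (n+1,j) = (n,j)"
  proof -
    have abT: "ab T' (n+1) j" using nj unfolding ab_def T'_def by auto
    have "Max {x. x<n+1 \<and> (x,j)\<in>T'} = n"
      by (rule Max_is) (auto intro: finite_subset[of _ "{..<n+1}"] simp: T'_def nj)
    then show ?thesis using parent_ab(1)[OF abT] by simp
  qed
  have pb: "parent T' (n,n+1) = (n,j)"
  proof -
    have nab: "\<not> ab T' n (n+1)" unfolding ab_def T'_def A_def using Tsub by fastforce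
    have lfb: "lf T' n (n+1)" using nj j unfolding lf_def T'_def by (intro exI[of _ j]) auto
    have "Max {y. y<n+1 \<and> (n,y)\<in>T'} = j"
      using j by (intro Max_is) (auto intro: finite_subset[of _ "{..<n+1}"] simp: T'_def nj A_def dest: row)
    then show ?thesis using parent_lf(1)[OF nab lfb] by simp
  qed
  have ch: "\<And>p. children T' p = children T p \<union> {q\<in>A. parent T' q = p}"
    unfolding T'_def by (rule add_children[OF NI A11])
  have chA: "\<And>p. {q\<in>A. parent T' q = p} = (if p = (n,j) then A else {})"
    using pa pb unfolding A_def by auto
  have chTA: "children T p = {}" if "p \<in> A" for p
  proof -
    have "\<And>q. q \<in> children T p \<Longrightarrow> False"
    proof -
      fix q assume "q \<in> children T p"
      then have "q\<in>T" "q\<noteq>(1,1)" "parent T q = p" unfolding children_def by auto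
      then have "p \<in> T" using par_in[of T q] CT by auto
      then show False using TA that by auto
    qed
    then show ?thesis by auto
  qed
  have chT'A: "children T' p = {}" if "p \<in> A" for p
    using ch[of p] chA[of p] chTA[OF that] that TA nj(1) by auto
  have wf: "wf2 T'"
    unfolding wf2_def
  proof (intro allI impI)
    fix i k assume h: "(i,k)\<in>T'" "(i,k)\<noteq>(1,1)"
    show "ab T' i k \<noteq> lf T' i k"
    proof (cases "(i,k) \<in> T")
      case True
      then show ?thesis using add_ab(1,2)[OF NI True] CT h(2) unfolding T'_def wf2_def by auto
    next
      case False
      then have "(i,k) \<in> A" using h unfolding T'_def by auto
      then consider "(i,k) = (n+1,j)" | "(i,k) = (n,n+1)" unfolding A_def by auto
      then show ?thesis
      proof cases
        case 1
        have "ab T' i k" using 1 nj unfolding ab_def T'_def by auto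
        moreover have "\<not> lf T' i k" using 1 Tsub unfolding lf_def T'_def A_def by fastforce
        ultimately show ?thesis by auto
      next
        case 2
        have "\<not> ab T' i k" using 2 Tsub unfolding ab_def T'_def A_def by fastforce
        moreover have "lf T' i k" using 2 nj j unfolding lf_def T'_def by (intro exI[of _ j]) auto
        ultimately show ?thesis by auto
      qed
    qed
  qed
  have cards: "card (children T' p) = 0 \<or> card (children T' p) = 2" if "p \<in> T'" for p
  proof (cases "p \<in> T")
    case True
    show ?thesis
    proof (cases "p = (n,j)")
      case True
      then have "children T' p = A" using ch[of p] chA[of p] nj by auto
      then show ?thesis unfolding A_def by auto
    next
      case False
      then have "children T' p = children T p" using ch[of p] chA[of p] by auto
      then show ?thesis using CT \<open>p\<in>T\<close> by auto
    qed
  next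
    case False
    then show ?thesis using chT'A that unfolding T'_def by auto
  qed
  have "is_CNM (n+1) T'"
    unfolding is_CNM_iff
  proof (intro conjI)
    show "T' \<subseteq> {1..n+1}\<times>{1..n+1}" using CT j unfolding T'_def A_def by auto
    show "(1,1) \<in> T'" using CT unfolding T'_def by auto
    show "wf2 T'" by (rule wf)
    show "\<forall>i\<in>{1..n+1}. \<exists>k. (i,k)\<in>T'"
    proof
      fix i assume "i \<in> {1..n+1}"
      then consider "i \<in> {1..n}" | "i = n+1" by fastforce
      then show "\<exists>k. (i,k)\<in>T'" using CT unfolding T'_def A_def by cases auto
    qed
    show "\<forall>k\<in>{1..n+1}. \<exists>i. (i,k)\<in>T'"
    proof
      fix k assume "k \<in> {1..n+1}"
      then consider "k \<in> {1..n}" | "k = n+1" by fastforce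
      then show "\<exists>i. (i,k)\<in>T'" using CT unfolding T'_def A_def by cases auto
    qed
    show "\<forall>p\<in>T'. card (children T' p) = 0 \<or> card (children T' p) = 2" using cards by blast
  qed
  moreover have "leaves T' = (leaves T - {(n,j)}) \<union> A"
  proof (intro set_eqI iffI)
    fix p assume h: "p \<in> leaves T'"
    then have p: "p \<in> T'" "children T' p = {}" unfolding leaves_def by auto
    show "p \<in> (leaves T - {(n,j)}) \<union> A"
    proof (cases "p \<in> A")
      case False
      then have "p \<in> T" using p unfolding T'_def by auto
      have "A \<noteq> {}" unfolding A_def by auto
      have "p \<noteq> (n,j)"
      proof
        assume "p = (n,j)"
        then have "A \<subseteq> children T' p" using ch[of p] chA[of p] by auto
        then show False using p(2) \<open>A \<noteq> {}\<close> by auto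
      qed
      have "children T p = {}" using p(2) ch[of p] by auto
      then show ?thesis using \<open>p \<in> T\<close> \<open>p \<noteq> (n,j)\<close> unfolding leaves_def by auto
    qed auto
  next
    fix p assume h: "p \<in> (leaves T - {(n,j)}) \<union> A"
    show "p \<in> leaves T'"
    proof (cases "p \<in> A")
      case True
      then show ?thesis using chT'A unfolding leaves_def T'_def by auto
    next
      case False
      then have "p \<in> T" "p \<noteq> (n,j)" "children T p = {}" using h unfolding leaves_def by auto
      then show ?thesis using ch[of p] chA[of p] unfolding leaves_def T'_def by auto
    qed
  qed
  ultimately show ?thesis unfolding T'_def A_def j_def by simp
qed


lemma bwd:
  assumes n1: "1 \<le> n" and sp: "\<sigma> permutes {1..n}" and C': "is_CNM (n+1) T'"
    and L': "leaves T' = perm_matrix (n+1) (extp n \<sigma>)"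
  shows "\<exists>T. is_CNM n T \<and> leaves T = perm_matrix n \<sigma> \<and> T' = T \<union> {(n+1,\<sigma> n),(n,n+1)}"
proof -
  define j where "j = \<sigma> n"
  define A where "A = {(n+1,j),(n,n+1)}"
  define T where "T = T' - A"
  note CT' = C'[unfolded is_CNM_iff]
  have j: "1 \<le> j" "j \<le> n" using permutes_in_image[OF sp, of n] n1 j_def by auto
  have fin': "finite T'" using cnm_finite[OF C'] .
  have PM: "perm_matrix (n+1) (extp n \<sigma>) = (perm_matrix n \<sigma> - {(n,j)}) \<union> A"
    using pm_ext[OF sp n1] unfolding A_def j_def .
  have rowT': "\<And>x. (n+1,x)\<in>T' \<Longrightarrow> x = j" using last_leaf(1)[OF C' L'] j_def
    by (auto simp: extp_def)
  have colT': "y = n" if "(y,n+1)\<in>T'" for y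
  proof -
    have y: "y\<in>{1..n+1}" "extp n \<sigma> y = n+1" using last_leaf(2)[OF C' L' that] by auto
    show ?thesis
    proof (rule ccontr)
      assume "y \<noteq> n"
      show False
      proof (cases "y = n+1")
        case True then show False using y j by (auto simp: extp_def j_def)
      next
        case False
        then have "y \<in> {1..n}" "\<sigma> y = n+1" using y \<open>y\<noteq>n\<close> by (auto simp: extp_def)
        then show False using permutes_in_image[OF sp, of y] by auto
      qed
    qed
  qed
  have AT': "A \<subseteq> T'" using L' PM unfolding leaves_def by auto
  have T'sub: "\<And>a c. (a,c) \<in> T' \<Longrightarrow> 1 \<le> a \<and> a \<le> n+1 \<and> 1 \<le> c \<and> c \<le> n+1" using CT' by auto
  have Tsub: "1 \<le> a \<and> a \<le> n \<and> 1 \<le> c \<and> c \<le> n" if "(a,c) \<in> T" for a c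
  proof -
    have h: "(a,c)\<in>T'" "(a,c)\<notin>A" using that unfolding T_def by auto
    have "a \<noteq> n+1" using h rowT'[of c] unfolding A_def by auto
    moreover have "c \<noteq> n+1" using h colT'[of a] unfolding A_def by auto
    ultimately show ?thesis using T'sub[OF h(1)] by auto
  qed
  have eq: "T' = T \<union> A" using AT' unfolding T_def by auto
  have TA: "T \<inter> A = {}" unfolding T_def by auto
  have NI: "\<forall>p\<in>A. \<forall>q\<in>T. \<not>(fst p < fst q \<and> snd p = snd q) \<and> \<not>(fst p = fst q \<and> snd p < snd q)"
    unfolding A_def using Tsub by fastforce
  have A11: "(1,1) \<notin> A" unfolding A_def using n1 by auto
  have bT': "(n,n+1) \<in> T'" using AT' unfolding A_def by auto
  have nab: "\<not> ab T' n (n+1)" unfolding ab_def using colT' by fastforce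
  have lfb: "lf T' n (n+1)" using CT' bT' nab n1 unfolding wf2_def by auto
  define M where "M = Max {y. y<n+1 \<and> (n,y)\<in>T'}"
  have pb: "parent T' (n,n+1) = (n,M)" using parent_lf(1)[OF nab lfb] M_def by simp
  have bch: "(n,n+1) \<in> children T' (n,M)" using bT' pb n1 unfolding children_def by auto
  have MT': "(n,M) \<in> T'" using child_cases[OF _ bch] CT' by blast
  have finch: "finite (children T' (n,M))" using fin' unfolding children_def by auto
  have "card (children T' (n,M)) \<noteq> 0" using bch finch by auto
  moreover have "card (children T' (n,M)) = 0 \<or> card (children T' (n,M)) = 2"
    using CT' MT' by blast
  ultimately have c2: "card (children T' (n,M)) = 2" by linarith
  obtain a c where ac: "children T' (n,M) = {(a,M),(n,c)}" "n<a" "M<c" "(a,M)\<in>T'"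
    using has_both[OF _ c2] CT' by blast
  have "a = n+1" using ac T'sub[of a M] by auto
  then have Mj: "M = j" using rowT' ac(4) by auto
  have "c = n+1" using bch ac by auto
  have chnj: "children T' (n,j) = A"
  proof -
    have "(n+1,j) \<in> children T' (n,j)" using ac \<open>a = n+1\<close> Mj by auto
    moreover have "(n,n+1) \<in> children T' (n,j)" using bch Mj by simp
    ultimately show ?thesis using ac Mj \<open>a = n+1\<close> \<open>c = n+1\<close> unfolding A_def by auto
  qed
  have njT': "(n,j) \<in> T'" using MT' Mj by simp
  have njT: "(n,j) \<in> T" using njT' j unfolding T_def A_def by auto
  have paT': "parent T' q = (n,j)" if "q \<in> A" for q
    using chnj that unfolding children_def by auto
  have ch: "\<And>p. children T' p = children T p \<union> {q\<in>A. parent T' q = p}"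
    unfolding eq by (rule add_children[OF NI A11])
  have chA: "\<And>p. {q\<in>A. parent T' q = p} = (if p = (n,j) then A else {})"
    using paT' unfolding A_def by auto
  have chT: "children T p = children T' p" if "p \<noteq> (n,j)" for p
    using ch[of p] chA[of p] that by auto
  have chTnj: "children T (n,j) = {}"
  proof -
    have "children T (n,j) \<subseteq> A" using ch[of "(n,j)"] chnj by auto
    moreover have "children T (n,j) \<subseteq> T" unfolding children_def by auto
    ultimately show ?thesis using TA by auto
  qed
  have wf: "wf2 T"
    unfolding wf2_def
  proof (intro allI impI)
    fix i k assume h: "(i,k)\<in>T" "(i,k)\<noteq>(1,1)"
    have "(i,k) \<in> T'" using h eq by auto
    then show "ab T i k \<noteq> lf T i k" using add_ab(1,2)[OF NI h(1)] CT' h(2)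
      unfolding eq[symmetric] wf2_def by auto
  qed
  have "is_CNM n T"
    unfolding is_CNM_iff
  proof (intro conjI)
    show "T \<subseteq> {1..n}\<times>{1..n}" using Tsub by auto
    show "(1,1) \<in> T" using CT' A11 unfolding T_def by auto
    show "wf2 T" by (rule wf)
    show "\<forall>i\<in>{1..n}. \<exists>k. (i,k)\<in>T"
    proof
      fix i assume i: "i \<in> {1..n}"
      then obtain k where "(i,k) \<in> T'" using CT' by fastforce
      then show "\<exists>k. (i,k)\<in>T" using i njT unfolding T_def A_def by (cases "i = n") auto
    qed
    show "\<forall>k\<in>{1..n}. \<exists>i. (i,k)\<in>T"
    proof
      fix k assume k: "k \<in> {1..n}"
      then obtain i where "(i,k) \<in> T'" using CT' by fastforce
      then show "\<exists>i. (i,k)\<in>T" using k njT unfolding T_def A_def by (cases "k = j") auto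
    qed
    show "\<forall>p\<in>T. card (children T p) = 0 \<or> card (children T p) = 2"
    proof
      fix p assume "p \<in> T"
      show "card (children T p) = 0 \<or> card (children T p) = 2"
      proof (cases "p = (n,j)")
        case True then show ?thesis using chTnj by simp
      next
        case False then show ?thesis using chT[OF False] CT' \<open>p\<in>T\<close> eq by auto
      qed
    qed
  qed
  moreover have "leaves T = perm_matrix n \<sigma>"
  proof (intro set_eqI iffI)
    fix p assume h: "p \<in> leaves T"
    then have p: "p \<in> T" "children T p = {}" unfolding leaves_def by auto
    show "p \<in> perm_matrix n \<sigma>"
    proof (cases "p = (n,j)")
      case True then show ?thesis unfolding perm_matrix_def j_def using n1 by auto
    next
      case False
      then have "p \<in> leaves T'" using p chT[OF False] eq unfolding leaves_def by auto
      then show ?thesis using L' PM p(1) TA by auto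
    qed
  next
    fix p assume h: "p \<in> perm_matrix n \<sigma>"
    show "p \<in> leaves T"
    proof (cases "p = (n,j)")
      case True then show ?thesis using njT chTnj unfolding leaves_def by auto
    next
      case False
      have "p \<notin> A" using h j permutes_in_image[OF sp] unfolding perm_matrix_def A_def j_def by fastforce
      have "p \<in> leaves T'" using L' PM h False by auto
      then show ?thesis using chT[OF False] \<open>p \<notin> A\<close> unfolding leaves_def T_def by auto
    qed
  qed
  ultimately show ?thesis using eq unfolding A_def j_def by blast
qed


definition sw :: "(nat\<times>nat) set \<Rightarrow> (nat\<times>nat) set" where "sw T = prod.swap ` T"

lemma mem_sw[simp]: "(x,y) \<in> sw T \<longleftrightarrow> (y,x) \<in> T"
  unfolding sw_def by force

lemma sw_sw[simp]: "sw (sw T) = T"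
  by (auto simp: sw_def image_image)

lemma card_sw: "card (sw X) = card X"
  unfolding sw_def by (rule card_image) (auto simp: inj_on_def)

lemma ab_sw: "ab (sw T) j i = lf T i j" "lf (sw T) j i = ab T i j"
  unfolding ab_def lf_def by auto

lemma parent_sw:
  assumes "wf2 T" "(i,j) \<in> T" "(i,j) \<noteq> (1,1)"
  shows "parent (sw T) (j,i) = prod.swap (parent T (i,j))"
proof (cases "ab T i j")
  case True
  then have nl: "\<not> lf T i j" using assms unfolding wf2_def by auto
  have s: "{y. y<i \<and> (j,y)\<in>sw T} = {x. x<i \<and> (x,j)\<in>T}" by auto
  have "\<not> ab (sw T) j i" "lf (sw T) j i" using True nl by (simp_all add: ab_sw)
  from parent_lf(1)[OF this] parent_ab(1)[OF True] s show ?thesis by simp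
next
  case False
  then have l: "lf T i j" using assms unfolding wf2_def by auto
  have s: "{x. x<j \<and> (x,i)\<in>sw T} = {y. y<j \<and> (i,y)\<in>T}" by auto
  have "ab (sw T) j i" using l by (simp add: ab_sw)
  from parent_ab(1)[OF this] parent_lf(1)[OF False l] s show ?thesis by simp
qed

lemma children_sw:
  assumes "wf2 T"
  shows "children (sw T) (j,i) = sw (children T (i,j))"
proof (intro set_eqI)
  fix q :: "nat \<times> nat"
  obtain b a where q: "q = (b,a)" by fastforce
  have "q \<in> children (sw T) (j,i) \<longleftrightarrow> (a,b) \<in> T \<and> (a,b) \<noteq> (1,1) \<and> parent (sw T) (b,a) = (j,i)"
    unfolding children_def q by auto
  also have "\<dots> \<longleftrightarrow> (a,b) \<in> T \<and> (a,b) \<noteq> (1,1) \<and> parent T (a,b) = (i,j)"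
    using parent_sw[OF assms, of a b] by (cases "parent T (a,b)") auto
  also have "\<dots> \<longleftrightarrow> q \<in> sw (children T (i,j))"
    unfolding children_def q by auto
  finally show "q \<in> children (sw T) (j,i) \<longleftrightarrow> q \<in> sw (children T (i,j))" .
qed

lemma cnm_sw:
  assumes C: "is_CNM n T"
  shows "is_CNM n (sw T) \<and> leaves (sw T) = sw (leaves T)"
proof -
  note CT = C[unfolded is_CNM_iff]
  have wf: "wf2 T" using CT by blast
  have "is_CNM n (sw T)"
    unfolding is_CNM_iff
  proof (intro conjI)
    show "sw T \<subseteq> {1..n}\<times>{1..n}" using CT by auto
    show "(1,1) \<in> sw T" using CT by auto
    show "wf2 (sw T)" using wf unfolding wf2_def by (auto simp: ab_sw)
    show "\<forall>i\<in>{1..n}. \<exists>k. (i,k)\<in>sw T" using CT by auto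
    show "\<forall>k\<in>{1..n}. \<exists>i. (i,k)\<in>sw T" using CT by auto
    show "\<forall>p\<in>sw T. card (children (sw T) p) = 0 \<or> card (children (sw T) p) = 2"
    proof
      fix p assume "p \<in> sw T"
      obtain j i where p: "p = (j,i)" by fastforce
      have "(i,j) \<in> T" using \<open>p \<in> sw T\<close> p by simp
      then show "card (children (sw T) p) = 0 \<or> card (children (sw T) p) = 2"
        using CT p children_sw[OF wf, of j i] card_sw by auto
    qed
  qed
  moreover have "leaves (sw T) = sw (leaves T)"
  proof (intro set_eqI)
    fix q :: "nat \<times> nat"
    obtain j i where q: "q = (j,i)" by fastforce
    have "children (sw T) (j,i) = {} \<longleftrightarrow> children T (i,j) = {}"
      using children_sw[OF wf, of j i] unfolding sw_def by auto
    then show "q \<in> leaves (sw T) \<longleftrightarrow> q \<in> sw (leaves T)"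
      unfolding leaves_def q by auto
  qed
  ultimately show ?thesis by blast
qed

lemma pm_inv:
  assumes sp: "\<sigma> permutes {1..n}"
  shows "perm_matrix n (inv \<sigma>) = sw (perm_matrix n \<sigma>)"
proof (intro set_eqI)
  fix q :: "nat \<times> nat"
  obtain x y where q: "q = (x,y)" by fastforce
  have "q \<in> perm_matrix n (inv \<sigma>) \<longleftrightarrow> x \<in> {1..n} \<and> y = inv \<sigma> x"
    unfolding perm_matrix_def q by auto
  also have "\<dots> \<longleftrightarrow> y \<in> {1..n} \<and> x = \<sigma> y"
    using permutes_inv_eq[OF sp, of x y] permutes_in_image[OF sp, of y] by auto
  also have "\<dots> \<longleftrightarrow> q \<in> sw (perm_matrix n \<sigma>)"
    unfolding perm_matrix_def q by auto
  finally show "q \<in> perm_matrix n (inv \<sigma>) \<longleftrightarrow> q \<in> sw (perm_matrix n \<sigma>)" .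
qed

lemma num_inv:
  assumes sp: "\<sigma> permutes {1..n}"
  shows "num_CNM n (inv \<sigma>) = num_CNM n \<sigma>"
proof -
  let ?A = "\<lambda>\<tau>. {T. is_CNM n T \<and> leaves T = perm_matrix n \<tau>}"
  have "?A (inv \<sigma>) = sw ` ?A \<sigma>"
  proof (intro set_eqI iffI)
    fix T' assume "T' \<in> ?A (inv \<sigma>)"
    then have h: "is_CNM n T'" "leaves T' = perm_matrix n (inv \<sigma>)" by auto
    have "is_CNM n (sw T')" "leaves (sw T') = perm_matrix n \<sigma>"
      using cnm_sw[OF h(1)] h(2) pm_inv[OF sp] by auto
    then have "sw T' \<in> ?A \<sigma>" by auto
    then show "T' \<in> sw ` ?A \<sigma>" by (metis image_eqI sw_sw)
  next
    fix T' assume "T' \<in> sw ` ?A \<sigma>"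
    then obtain T where T: "T' = sw T" "is_CNM n T" "leaves T = perm_matrix n \<sigma>" by auto
    then show "T' \<in> ?A (inv \<sigma>)" using cnm_sw[OF T(2)] pm_inv[OF sp] by auto
  qed
  moreover have "inj_on sw X" for X by (metis inj_onI sw_sw)
  ultimately show ?thesis unfolding num_CNM_def by (simp add: card_image)
qed

lemma num_ext:
  assumes sp: "\<sigma> permutes {1..n}" and n1: "1 \<le> n"
  shows "num_CNM (n+1) (extp n \<sigma>) = num_CNM n \<sigma>"
proof -
  define A where "A = {(n+1,\<sigma> n),(n,n+1)}"
  let ?A = "{T. is_CNM n T \<and> leaves T = perm_matrix n \<sigma>}"
  let ?B = "{T. is_CNM (n+1) T \<and> leaves T = perm_matrix (n+1) (extp n \<sigma>)}"
  have "?B = (\<lambda>T. T \<union> A) ` ?A"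
  proof (intro set_eqI iffI)
    fix T' assume "T' \<in> ?B"
    then show "T' \<in> (\<lambda>T. T \<union> A) ` ?A" using bwd[OF n1 sp] unfolding A_def by blast
  next
    fix T' assume "T' \<in> (\<lambda>T. T \<union> A) ` ?A"
    then obtain T where T: "T' = T \<union> A" "is_CNM n T" "leaves T = perm_matrix n \<sigma>" by auto
    then show "T' \<in> ?B" using fwd[OF n1 sp T(2,3)] pm_ext[OF sp n1] unfolding A_def by auto
  qed
  moreover have "inj_on (\<lambda>T. T \<union> A) ?A"
  proof (rule inj_onI)
    fix T1 T2 assume h: "T1 \<in> ?A" "T2 \<in> ?A" "T1 \<union> A = T2 \<union> A"
    have "T1 \<inter> A = {}" "T2 \<inter> A = {}" using h(1,2) unfolding A_def is_CNM_iff by auto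
    then show "T1 = T2" using h(3) by blast
  qed
  ultimately show ?thesis unfolding num_CNM_def by (simp add: card_image)
qed

lemma num_zero:
  assumes n2: "2 \<le> n" and sp: "\<sigma> permutes {1..n}" and fx: "\<sigma> n = n"
  shows "num_CNM n \<sigma> = 0"
proof -
  have "{T. is_CNM n T \<and> leaves T = perm_matrix n \<sigma>} = {}"
  proof (rule ccontr)
    assume "{T. is_CNM n T \<and> leaves T = perm_matrix n \<sigma>} \<noteq> {}"
    then obtain T where C: "is_CNM n T" and L: "leaves T = perm_matrix n \<sigma>" by auto
    note CT = C[unfolded is_CNM_iff]
    have "(n,n) \<in> perm_matrix n \<sigma>" unfolding perm_matrix_def using fx n2 by auto
    then have nn: "(n,n) \<in> T" using L unfolding leaves_def by auto
    have "\<not> ab T n n"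
    proof
      assume "ab T n n"
      then obtain x where "x<n" "(x,n)\<in>T" unfolding ab_def by auto
      then have "\<sigma> x = \<sigma> n" using last_leaf(2)[OF C L] fx by auto
      then show False using permutes_inj[OF sp] \<open>x<n\<close> by (auto dest: injD)
    qed
    moreover have "\<not> lf T n n"
    proof
      assume "lf T n n"
      then obtain y where "y<n" "(n,y)\<in>T" unfolding lf_def by auto
      then show False using last_leaf(1)[OF C L] fx by auto
    qed
    ultimately show False using CT nn n2 unfolding wf2_def by auto
  qed
  then show ?thesis unfolding num_CNM_def by (simp only: card.empty)
qed

lemma extp_inj:
  assumes "\<sigma>1 permutes {1..n}" "\<sigma>2 permutes {1..n}" "extp n \<sigma>1 = extp n \<sigma>2"
  shows "\<sigma>1 = \<sigma>2"
proof
  fix x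
  show "\<sigma>1 x = \<sigma>2 x"
  proof (cases "x = n \<or> x = n+1")
    case True
    then show ?thesis
    proof
      assume "x = n"
      then show ?thesis using fun_cong[OF assms(3), of "n+1"] by (simp add: extp_def)
    next
      assume "x = n+1"
      then show ?thesis using permutes_not_in[OF assms(1)] permutes_not_in[OF assms(2)] by auto
    qed
  next
    case False
    then show ?thesis using fun_cong[OF assms(3), of x] by (simp add: extp_def)
  qed
qed

theorem theorem5p1:
  fixes n k :: nat
  assumes "n \<ge> 2" and "k \<ge> 1"
  shows "b (n + 1) k \<ge> 2 * b n k"
proof -
  have n1: "1 \<le> n" using assms(1) by simp
  define S where "S = (\<lambda>m. {\<sigma>. \<sigma> permutes {1..m} \<and> num_CNM m \<sigma> = k})"
  have bS: "b m k = card (S m)" for m unfolding b_def S_def by simp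
  define f1 where "f1 = extp n"
  define f2 where "f2 = (\<lambda>\<sigma>. inv (extp n (inv \<sigma>)))"
  have im1: "f1 ` S n \<subseteq> S (n+1)"
    unfolding f1_def S_def using extp_permutes[OF _ n1] num_ext[OF _ n1] by auto
  have im2: "f2 ` S n \<subseteq> S (n+1)"
  proof
    fix \<tau> assume "\<tau> \<in> f2 ` S n"
    then obtain \<sigma> where \<sigma>: "\<sigma> permutes {1..n}" "num_CNM n \<sigma> = k" "\<tau> = f2 \<sigma>"
      unfolding S_def by auto
    have i: "inv \<sigma> permutes {1..n}" using permutes_inv[OF \<sigma>(1)] .
    have e: "extp n (inv \<sigma>) permutes {1..n+1}" using extp_permutes[OF i n1] .
    have "num_CNM (n+1) \<tau> = k"
      using \<sigma> num_inv[OF e] num_ext[OF i n1] num_inv[OF \<sigma>(1)] unfolding f2_def by simp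
    moreover have "\<tau> permutes {1..n+1}" using permutes_inv[OF e] \<sigma>(3) unfolding f2_def by simp
    ultimately show "\<tau> \<in> S (n+1)" unfolding S_def by simp
  qed
  have inj1: "inj_on f1 (S n)"
    unfolding f1_def S_def by (rule inj_onI) (auto intro: extp_inj)
  have inj2: "inj_on f2 (S n)"
  proof (rule inj_onI)
    fix \<sigma>1 \<sigma>2 assume h: "\<sigma>1 \<in> S n" "\<sigma>2 \<in> S n" "f2 \<sigma>1 = f2 \<sigma>2"
    have p: "\<sigma>1 permutes {1..n}" "\<sigma>2 permutes {1..n}" using h unfolding S_def by auto
    have i: "inv \<sigma>1 permutes {1..n}" "inv \<sigma>2 permutes {1..n}" using p by (simp_all add: permutes_inv)
    have "extp n (inv \<sigma>1) = extp n (inv \<sigma>2)"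
      using arg_cong[OF h(3), of inv] permutes_inv_inv[OF extp_permutes[OF i(1) n1]]
        permutes_inv_inv[OF extp_permutes[OF i(2) n1]] unfolding f2_def by simp
    then have "inv \<sigma>1 = inv \<sigma>2" using extp_inj[OF i] by simp
    then show "\<sigma>1 = \<sigma>2" using permutes_inv_inv[OF p(1)] permutes_inv_inv[OF p(2)] by metis
  qed
  have disj: "f1 ` S n \<inter> f2 ` S n = {}"
  proof (rule ccontr)
    assume "f1 ` S n \<inter> f2 ` S n \<noteq> {}"
    then obtain \<sigma> \<rho> where h: "\<sigma> \<in> S n" "\<rho> \<in> S n" "f1 \<sigma> = f2 \<rho>" by blast
    have p: "\<sigma> permutes {1..n}" "\<rho> permutes {1..n}" "num_CNM n \<sigma> = k" using h unfolding S_def by auto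
    have i: "inv \<rho> permutes {1..n}" using permutes_inv[OF p(2)] .
    have e: "extp n (inv \<rho>) permutes {1..n+1}" using extp_permutes[OF i n1] .
    have "f2 \<rho> (n+1) = n"
      using permutes_inverses(2)[OF e, of n] unfolding f2_def by (simp add: extp_def)
    moreover have "f1 \<sigma> (n+1) = \<sigma> n" unfolding f1_def by (simp add: extp_def)
    ultimately have "\<sigma> n = n" using h(3) by simp
    then have "num_CNM n \<sigma> = 0" using num_zero[OF assms(1) p(1)] by simp
    then show False using p(3) assms(2) by simp
  qed
  have finS: "finite (S (n+1))"
    unfolding S_def by (rule finite_subset[OF _ finite_permutations[of "{1..n+1}"]]) auto
  have "2 * b n k = card (f1 ` S n) + card (f2 ` S n)"
    using card_image[OF inj1] card_image[OF inj2] bS[of n] by simp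
  also have "\<dots> = card (f1 ` S n \<union> f2 ` S n)"
    using card_Un_disjoint[OF finite_subset[OF im1 finS] finite_subset[OF im2 finS] disj] by simp
  also have "\<dots> \<le> card (S (n+1))" using im1 im2 finS by (intro card_mono) auto
  finally show ?thesis using bS[of "n+1"] by simp
qed

end
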